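(* Let $k\ge1$ and consider the cycle $C_{4k}$ with consecutive vertices $u,v,w$ (so $u\sim v$ and $v\sim w$). Let $\alpha\ne0$ be real, give the edges $\{u,v\}$ and $\{v,w\}$ weight $1/\alpha$ and all other edges weight $1$. If $|\alpha|>\sqrt{2k-1}$, then $v$ is sedentary.
   Context: For a weighted graph with weighted adjacency matrix $A$, $U(t)=e^{itA}$. A vertex $u$ is sedentary if $\inf_{t>0}|U(t)_{u,u}|\ge C$ for some constant $0<C\le1$. *)

theory Defs
  imports "HOL-Analysis.Analysis"
begin

definition cyc_adj :: "nat \<Rightarrow> nat \<Rightarrow> nat \<Rightarrow> bool" where
  "cyc_adj N i j \<longleftrightarrow> i < N \<and> j < N \<and> (j = (i + 1) mod N \<or> i = (j + 1) mod N)"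

definition wcyc :: "nat \<Rightarrow> nat \<Rightarrow> nat \<Rightarrow> nat \<Rightarrow> real \<Rightarrow> nat \<Rightarrow> nat \<Rightarrow> real" where
  "wcyc N u v w \<alpha> i j =
     (if cyc_adj N i j then
        (if {i, j} = {u, v} \<or> {i, j} = {v, w} then 1 / \<alpha> else 1)
      else 0)"

fun mat_pow :: "nat \<Rightarrow> (nat \<Rightarrow> nat \<Rightarrow> complex) \<Rightarrow> nat \<Rightarrow> nat \<Rightarrow> nat \<Rightarrow> complex" where
  "mat_pow N A 0 = (\<lambda>i j. if i = j then 1 else 0)"
| "mat_pow N A (Suc n) = (\<lambda>i j. \<Sum>l<N. A i l * mat_pow N A n l j)"

definition transition :: "nat \<Rightarrow> (nat \<Rightarrow> nat \<Rightarrow> real) \<Rightarrow> real \<Rightarrow> nat \<Rightarrow> nat \<Rightarrow> complex" where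
  "transition N A t a b =
     (\<Sum>n. (\<i> * complex_of_real t) ^ n / of_nat (fact n)
             * mat_pow N (\<lambda>i j. complex_of_real (A i j)) n a b)"

definition sedentary :: "nat \<Rightarrow> (nat \<Rightarrow> nat \<Rightarrow> real) \<Rightarrow> nat \<Rightarrow> bool" where
  "sedentary N A a \<longleftrightarrow>
     (\<exists>C::real. 0 < C \<and> C \<le> 1 \<and> (INF t\<in>{0<..}. cmod (transition N A t a a)) \<ge> C)"

end

theory Submission
  imports Defs
begin


lemma sum_delta_l:
  assumes "(a::nat) < N"
  shows "(\<Sum>l<N. (if a = l then 1 else 0) * f l) = (f a :: 'a::semiring_1)"
proof -
  have "(\<Sum>l<N. (if a = l then 1 else 0) * f l) = (\<Sum>l<N. if a = l then f l else 0)" by (rule sum.cong) auto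
  then show ?thesis using assms by simp
qed

lemma sum_delta_r:
  assumes "(b::nat) < N"
  shows "(\<Sum>l<N. f l * (if l = b then 1 else 0)) = (f b :: 'a::semiring_1)"
proof -
  have "(\<Sum>l<N. f l * (if l = b then 1 else 0)) = (\<Sum>l<N. if l = b then f l else 0)" by (rule sum.cong) auto
  then show ?thesis using assms by simp
qed

lemma mp_add:
  assumes "a < N"
  shows "mat_pow N P (m + n) a b = (\<Sum>l<N. mat_pow N P m a l * mat_pow N P n l b)"
  using assms
proof (induction m arbitrary: a)
  case 0
  then show ?case using sum_delta_l[of a N "\<lambda>l. mat_pow N P n l b"] by simp
next
  case (Suc m)
  have "mat_pow N P (Suc m + n) a b = (\<Sum>l<N. P a l * mat_pow N P (m + n) l b)" by simp
  also have "\<dots> = (\<Sum>l<N. P a l * (\<Sum>l'<N. mat_pow N P m l l' * mat_pow N P n l' b))"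
    using Suc.IH by simp
  also have "\<dots> = (\<Sum>l'<N. (\<Sum>l<N. P a l * mat_pow N P m l l') * mat_pow N P n l' b)"
    unfolding sum_distrib_left sum_distrib_right mult.assoc by (rule sum.swap)
  finally show ?case by simp
qed

lemma mp_Suc_right:
  assumes "a < N" "b < N"
  shows "mat_pow N P (Suc n) a b = (\<Sum>l<N. mat_pow N P n a l * P l b)"
proof -
  have "mat_pow N P (n + 1) a b = (\<Sum>l<N. mat_pow N P n a l * mat_pow N P 1 l b)"
    by (rule mp_add[OF assms(1)])
  moreover have "mat_pow N P 1 l b = P l b" for l
    using assms(2) sum_delta_r[of b N] by simp
  ultimately show ?thesis by simp
qed

lemma mp_sym:
  assumes "\<And>i j. i < N \<Longrightarrow> j < N \<Longrightarrow> P i j = P j i" "a < N" "b < N"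
  shows "mat_pow N P n a b = mat_pow N P n b a"
  using assms(2,3)
proof (induction n arbitrary: a b)
  case 0
  then show ?case by auto
next
  case (Suc n)
  have "mat_pow N P (Suc n) a b = (\<Sum>l<N. mat_pow N P n a l * P l b)"
    using mp_Suc_right Suc.prems by blast
  also have "\<dots> = (\<Sum>l<N. P b l * mat_pow N P n l a)"
    using Suc.IH Suc.prems assms(1) by (intro sum.cong) (auto simp: mult.commute)
  finally show ?case by simp
qed

lemma mp_bound:
  assumes "a < N"
  shows "cmod (mat_pow N P n a b) \<le> (\<Sum>i<N. \<Sum>j<N. cmod (P i j)) ^ n"
  using assms
proof (induction n arbitrary: a)
  case 0
  then show ?case by auto
next
  case (Suc n)
  let ?M = "(\<Sum>i<N. \<Sum>j<N. cmod (P i j))"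
  have "cmod (mat_pow N P (Suc n) a b) \<le> (\<Sum>l<N. cmod (P a l * mat_pow N P n l b))"
    by (simp add: norm_sum)
  also have "\<dots> \<le> (\<Sum>l<N. cmod (P a l) * ?M ^ n)"
    using Suc.IH by (intro sum_mono) (simp add: norm_mult mult_left_mono)
  also have "\<dots> = (\<Sum>l<N. cmod (P a l)) * ?M ^ n"
    by (simp add: sum_distrib_right)
  also have "\<dots> \<le> ?M * ?M ^ n"
  proof (rule mult_right_mono)
    show "(\<Sum>l<N. cmod (P a l)) \<le> ?M"
      using Suc.prems by (intro member_le_sum[where f = "\<lambda>i. \<Sum>j<N. cmod (P i j)"]) (auto intro: sum_nonneg)
    show "0 \<le> ?M ^ n" by (intro zero_le_power sum_nonneg) auto
  qed
  finally show ?case by simp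
qed

lemma mp_summable:
  assumes "a < N"
  shows "summable (\<lambda>n. norm (z ^ n / of_nat (fact n) * mat_pow N P n a b))"
proof -
  let ?M = "(\<Sum>i<N. \<Sum>j<N. cmod (P i j))"
  have s: "summable (\<lambda>n. inverse (fact n) * (cmod z * ?M) ^ n)" by (rule summable_exp)
  show ?thesis
  proof (rule summable_comparison_test'[OF s])
    fix n
    have "norm (norm (z ^ n / of_nat (fact n) * mat_pow N P n a b)) = cmod z ^ n / fact n * cmod (mat_pow N P n a b)"
      by (simp add: norm_mult norm_divide norm_power)
    also have "\<dots> \<le> cmod z ^ n / fact n * ?M ^ n"
      by (intro mult_left_mono mp_bound assms) auto
    also have "\<dots> = inverse (fact n) * (cmod z * ?M) ^ n"
      by (simp add: power_mult_distrib field_simps)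
    finally show "norm (norm (z ^ n / of_nat (fact n) * mat_pow N P n a b)) \<le> inverse (fact n) * (cmod z * ?M) ^ n" .
  qed
qed

lemma trans_sym:
  assumes "\<And>i j. i < N \<Longrightarrow> j < N \<Longrightarrow> A i j = A j i" "a < N" "b < N"
  shows "transition N A t a b = transition N A t b a"
proof -
  have "mat_pow N (\<lambda>i j. complex_of_real (A i j)) n a b = mat_pow N (\<lambda>i j. complex_of_real (A i j)) n b a" for n
    by (rule mp_sym) (use assms in auto)
  then show ?thesis unfolding transition_def by (rule_tac f=suminf in arg_cong) (rule ext, simp only:)
qed

lemma mp_cnj: "cnj (mat_pow N (\<lambda>i j. complex_of_real (A i j)) n a b) = mat_pow N (\<lambda>i j. complex_of_real (A i j)) n a b"
  by (induction n arbitrary: a b) auto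

lemma trans_summable:
  assumes "a < N"
  shows "summable (\<lambda>n. (\<i> * complex_of_real t) ^ n / of_nat (fact n) * mat_pow N (\<lambda>i j. complex_of_real (A i j)) n a b)"
  using mp_summable[OF assms] by (rule summable_norm_cancel)

lemma trans_cnj:
  assumes "a < N"
  shows "cnj (transition N A t a b) = transition N A (-t) a b"
proof -
  let ?f = "\<lambda>n. (\<i> * complex_of_real t) ^ n / of_nat (fact n) * mat_pow N (\<lambda>i j. complex_of_real (A i j)) n a b"
  have "?f sums transition N A t a b" unfolding transition_def
    using trans_summable[OF assms] by (rule summable_sums)
  then have "(\<lambda>n. cnj (?f n)) sums cnj (transition N A t a b)" by (simp only: sums_cnj)
  moreover have "(\<lambda>n. cnj (?f n)) = (\<lambda>n. (\<i> * complex_of_real (-t)) ^ n / of_nat (fact n) * mat_pow N (\<lambda>i j. complex_of_real (A i j)) n a b)"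
    by (rule ext) (simp add: mp_cnj)
  ultimately have "(\<lambda>n. (\<i> * complex_of_real (-t)) ^ n / of_nat (fact n) * mat_pow N (\<lambda>i j. complex_of_real (A i j)) n a b) sums cnj (transition N A t a b)"
    by simp
  then have "cnj (transition N A t a b) = (\<Sum>n. (\<i> * complex_of_real (-t)) ^ n / of_nat (fact n) * mat_pow N (\<lambda>i j. complex_of_real (A i j)) n a b)"
    by (rule sums_unique)
  then show ?thesis by (simp only: transition_def)
qed

lemma trans_zero:
  assumes "a < N"
  shows "transition N A 0 a b = (if a = b then 1 else 0)"
proof -
  have "(\<lambda>n. (\<i> * complex_of_real 0) ^ n / of_nat (fact n) * mat_pow N (\<lambda>i j. complex_of_real (A i j)) n a b)
     = (\<lambda>n. if n = 0 then (if a = b then 1 else 0) else 0)" by (rule ext) (case_tac n, auto)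
  moreover have "(\<lambda>n. if n = 0 then (if a = b then 1 else 0) else 0) sums (if a = b then 1 else (0::complex))"
    using sums_single[of 0 "\<lambda>_. if a = b then 1 else (0::complex)"] by simp
  ultimately show ?thesis unfolding transition_def by (simp add: sums_iff)
qed

lemma S_conv: "(x::complex) ^ n /\<^sub>R fact n = x ^ n / of_nat (fact n)"
  by (simp add: scaleR_conv_of_real divide_inverse mult.commute)

lemma binom_exp:
  "(\<Sum>i\<le>n. (x::complex) ^ i / of_nat (fact i) * (y ^ (n - i) / of_nat (fact (n - i)))) = (x + y) ^ n / of_nat (fact n)"
  using exp_series_add_commuting[of x y n] by (simp add: S_conv mult.commute)

lemma sum_cc:
  "(\<Sum>l\<in>S. (c1 * f l) * (c2 * g l)) = (c1 * c2) * (\<Sum>l\<in>S. f l * g l :: 'a::comm_ring)"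
  by (simp add: sum_distrib_left mult_ac)

lemma trans_mult:
  assumes "a < N" "b < N"
  shows "(\<Sum>l<N. transition N A s a l * transition N A t l b) = transition N A (s + t) a b"
proof -
  let ?P = "\<lambda>i j. complex_of_real (A i j)"
  define F where "F l n = (\<i> * of_real s)^n / of_nat (fact n) * mat_pow N ?P n a l" for l n
  define G where "G l n = (\<i> * of_real t)^n / of_nat (fact n) * mat_pow N ?P n l b" for l n
  have sF: "summable (\<lambda>n. norm (F l n))" for l unfolding F_def by (rule mp_summable[OF assms(1)])
  have sG: "l < N \<Longrightarrow> summable (\<lambda>n. norm (G l n))" for l unfolding G_def by (rule mp_summable)
  have "(\<Sum>l<N. transition N A s a l * transition N A t l b) = (\<Sum>l<N. \<Sum>n. \<Sum>i\<le>n. F l i * G l (n - i))"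
  proof (intro sum.cong refl)
    fix l assume l: "l \<in> {..<N}"
    have "transition N A s a l * transition N A t l b = suminf (F l) * suminf (G l)"
      unfolding transition_def F_def[abs_def] G_def[abs_def] by simp
    also have "\<dots> = (\<Sum>n. \<Sum>i\<le>n. F l i * G l (n - i))"
      using l by (intro Cauchy_product[OF sF sG]) auto
    finally show "transition N A s a l * transition N A t l b = (\<Sum>n. \<Sum>i\<le>n. F l i * G l (n - i))" .
  qed
  also have "\<dots> = (\<Sum>n. \<Sum>l<N. \<Sum>i\<le>n. F l i * G l (n - i))"
    by (rule suminf_sum[symmetric], rule summable_Cauchy_product[OF sF sG]) auto
  also have "\<dots> = (\<Sum>n. (\<i> * of_real (s + t))^n / of_nat (fact n) * mat_pow N ?P n a b)"
  proof (rule suminf_cong)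
    fix n
    have "(\<Sum>l<N. \<Sum>i\<le>n. F l i * G l (n - i)) = (\<Sum>i\<le>n. \<Sum>l<N. F l i * G l (n - i))"
      by (rule sum.swap)
    also have "\<dots> = (\<Sum>i\<le>n. ((\<i> * of_real s)^i / of_nat (fact i) * ((\<i> * of_real t)^(n-i) / of_nat (fact (n-i))))
                 * (\<Sum>l<N. mat_pow N ?P i a l * mat_pow N ?P (n - i) l b))"
      unfolding F_def G_def by (simp only: sum_cc)
    also have "\<dots> = (\<Sum>i\<le>n. ((\<i> * of_real s)^i / of_nat (fact i) * ((\<i> * of_real t)^(n-i) / of_nat (fact (n-i))))
                 * mat_pow N ?P n a b)"
    proof (intro sum.cong refl)
      fix i assume "i \<in> {..n}"
      then have "i + (n - i) = n" by auto
      then show "((\<i> * of_real s)^i / of_nat (fact i) * ((\<i> * of_real t)^(n-i) / of_nat (fact (n-i))))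
                 * (\<Sum>l<N. mat_pow N ?P i a l * mat_pow N ?P (n - i) l b) = ((\<i> * of_real s)^i / of_nat (fact i) * ((\<i> * of_real t)^(n-i) / of_nat (fact (n-i))))
                 * mat_pow N ?P n a b"
        by (simp only: mp_add[OF assms(1), of ?P i "n - i" b, symmetric] \<open>i + (n - i) = n\<close>)
    qed
    also have "\<dots> = (\<i> * of_real s + \<i> * of_real t)^n / of_nat (fact n) * mat_pow N ?P n a b"
      by (simp only: sum_distrib_right[symmetric] binom_exp)
    also have "\<i> * complex_of_real s + \<i> * complex_of_real t = \<i> * complex_of_real (s + t)"
      by (simp add: distrib_left)
    finally show "(\<Sum>l<N. \<Sum>i\<le>n. F l i * G l (n - i)) = (\<i> * of_real (s + t))^n / of_nat (fact n) * mat_pow N ?P n a b" .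
  qed
  also have "\<dots> = transition N A (s + t) a b" unfolding transition_def by (rule refl)
  finally show ?thesis .
qed

lemma trans_fix:
  assumes a: "a < N" and ker: "\<And>i. i < N \<Longrightarrow> (\<Sum>l<N. A i l * x l) = 0"
  shows "(\<Sum>b<N. transition N A t a b * of_real (x b)) = of_real (x a)"
proof -
  let ?P = "\<lambda>i j. complex_of_real (A i j)"
  let ?c = "\<lambda>n. (\<i> * complex_of_real t) ^ n / of_nat (fact n)"
  have s: "summable (\<lambda>n. ?c n * mat_pow N ?P n a b)" for b by (rule trans_summable[OF a])
  have "(\<Sum>b<N. transition N A t a b * of_real (x b)) = (\<Sum>b<N. \<Sum>n. ?c n * mat_pow N ?P n a b * of_real (x b))"
    unfolding transition_def by (intro sum.cong refl) (rule suminf_mult2[OF s])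
  also have "\<dots> = (\<Sum>n. \<Sum>b<N. ?c n * mat_pow N ?P n a b * of_real (x b))"
    by (intro suminf_sum[symmetric] summable_mult2 s)
  also have "\<dots> = (\<Sum>n. if n = 0 then of_real (x a) else 0)"
  proof (rule suminf_cong)
    fix n
    show "(\<Sum>b<N. ?c n * mat_pow N ?P n a b * of_real (x b)) = (if n = 0 then of_real (x a) else 0)"
    proof (cases n)
      case 0
      then show ?thesis using sum_delta_l[OF a, of "\<lambda>b. complex_of_real (x b)"] by simp
    next
      case (Suc m)
      have "(\<Sum>b<N. mat_pow N ?P (Suc m) a b * of_real (x b)) = (\<Sum>b<N. (\<Sum>l<N. mat_pow N ?P m a l * ?P l b) * of_real (x b))"
        by (intro sum.cong refl, subst mp_Suc_right[OF a]) auto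
      also have "\<dots> = (\<Sum>b<N. \<Sum>l<N. mat_pow N ?P m a l * (?P l b * of_real (x b)))"
        by (simp only: sum_distrib_right mult.assoc)
      also have "\<dots> = (\<Sum>l<N. \<Sum>b<N. mat_pow N ?P m a l * (?P l b * of_real (x b)))"
        by (rule sum.swap)
      also have "\<dots> = (\<Sum>l<N. mat_pow N ?P m a l * of_real (\<Sum>b<N. A l b * x b))"
        by (simp only: sum_distrib_left of_real_sum of_real_mult)
      also have "\<dots> = 0" using ker by simp
      finally have "(\<Sum>b<N. mat_pow N ?P (Suc m) a b * of_real (x b)) = 0" .
      then have "?c n * (\<Sum>b<N. mat_pow N ?P n a b * of_real (x b)) = 0" using Suc by simp
      moreover have "(\<Sum>b<N. ?c n * mat_pow N ?P n a b * of_real (x b)) = ?c n * (\<Sum>b<N. mat_pow N ?P n a b * of_real (x b))"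
        by (simp only: sum_distrib_left mult.assoc)
      ultimately show ?thesis using Suc by simp
    qed
  qed
  also have "\<dots> = of_real (x a)"
    using sums_single[of 0 "\<lambda>_. complex_of_real (x a)"] by (simp add: sums_iff)
  finally show ?thesis .
qed

lemma trans_norm:
  assumes sym: "\<And>i j. i < N \<Longrightarrow> j < N \<Longrightarrow> A i j = A j i"
  shows "(\<Sum>a<N. (cmod (\<Sum>b<N. transition N A t a b * of_real (r b)))^2) = (\<Sum>b<N. (r b)^2)"
proof -
  let ?U = "transition N A t" and ?V = "transition N A (-t)"
  have "complex_of_real (\<Sum>a<N. (cmod (\<Sum>b<N. ?U a b * of_real (r b)))^2)
      = (\<Sum>a<N. cnj (\<Sum>b<N. ?U a b * of_real (r b)) * (\<Sum>b<N. ?U a b * of_real (r b)))"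
    by (subst of_real_sum, intro sum.cong refl, subst complex_norm_square, rule mult.commute)
  also have "\<dots> = (\<Sum>a<N. \<Sum>b<N. \<Sum>b'<N. (cnj (?U a b) * of_real (r b)) * (?U a b' * of_real (r b')))"
    by (simp add: cnj_sum sum_product)
  also have "\<dots> = (\<Sum>b<N. \<Sum>a<N. \<Sum>b'<N. (cnj (?U a b) * of_real (r b)) * (?U a b' * of_real (r b')))"
    by (rule sum.swap)
  also have "\<dots> = (\<Sum>b<N. \<Sum>b'<N. \<Sum>a<N. (cnj (?U a b) * of_real (r b)) * (?U a b' * of_real (r b')))"
    by (intro sum.cong refl sum.swap)
  also have "\<dots> = (\<Sum>b<N. \<Sum>b'<N. of_real (r b * r b') * (\<Sum>a<N. ?V b a * ?U a b'))"
  proof (intro sum.cong refl)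
    fix b b' assume b: "b \<in> {..<N}" and b': "b' \<in> {..<N}"
    have "cnj (?U a b) = ?V b a" if "a \<in> {..<N}" for a
      using that b trans_cnj[of a N A t b] trans_sym[OF sym, where a=b and b=a and t="-t"] by auto
    then show "(\<Sum>a<N. (cnj (?U a b) * of_real (r b)) * (?U a b' * of_real (r b'))) = of_real (r b * r b') * (\<Sum>a<N. ?V b a * ?U a b')"
      by (simp add: sum_distrib_left mult_ac)
  qed
  also have "\<dots> = (\<Sum>b<N. \<Sum>b'<N. of_real (r b * r b') * (if b = b' then 1 else 0))"
    by (intro sum.cong refl) (simp add: trans_mult trans_zero)
  also have "\<dots> = (\<Sum>b<N. \<Sum>b'<N. if b = b' then of_real (r b * r b') else 0)"
    by (intro sum.cong refl) auto
  also have "\<dots> = (\<Sum>b<N. of_real ((r b)^2))"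
    by (simp add: power2_eq_square)
  also have "\<dots> = complex_of_real (\<Sum>b<N. (r b)^2)" by simp
  finally show ?thesis by (simp only: of_real_eq_iff)
qed



lemma sed_bound:
  assumes sym: "\<And>i j. i < N \<Longrightarrow> j < N \<Longrightarrow> A i j = A j i"
    and v: "v < N" and ker: "\<And>i. i < N \<Longrightarrow> (\<Sum>l<N. A i l * x l) = 0"
    and xv: "x v = 1"
  shows "cmod (transition N A t v v) \<ge> 2 / (\<Sum>l<N. (x l)^2) - 1"
proof -
  define S where "S = (\<Sum>l<N. (x l)^2)"
  have S1: "S \<ge> 1"
    unfolding S_def using member_le_sum[of v "{..<N}" "\<lambda>l. (x l)^2"] v xv by auto
  define c where "c = 1 / S"
  have cS: "c * S = 1" using S1 by (simp add: c_def)
  define e where "e l = (if l = v then 1 else (0::real))" for l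
  define r where "r l = e l - c * x l" for l
  let ?U = "transition N A t"
  define w where "w a = (\<Sum>b<N. ?U a b * of_real (r b))" for a
  have Ux: "(\<Sum>b<N. ?U a b * of_real (x b)) = of_real (x a)" if "a < N" for a
    by (rule trans_fix[OF that ker])
  have ee: "(\<Sum>l<N. e l * f l) = f v" for f :: "nat \<Rightarrow> real"
    using sum_delta_l[OF v, of f] unfolding e_def by (simp add: eq_commute)
  have eec: "(\<Sum>l<N. ?U a l * of_real (e l)) = ?U a v" for a
    using sum_delta_r[OF v, of "?U a"] unfolding e_def by (simp add: if_distrib cong: if_cong)
  have "?U v v = (\<Sum>b<N. ?U v b * of_real (r b + c * x b))"
    using eec[of v] by (simp add: r_def)
  also have "\<dots> = w v + of_real c * (\<Sum>b<N. ?U v b * of_real (x b))"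
    by (simp add: w_def distrib_left sum.distrib sum_distrib_left mult_ac)
  also have "\<dots> = w v + of_real c" using Ux[OF v] xv by simp
  finally have Uvv: "?U v v = w v + of_real c" .
  have xw: "(\<Sum>a<N. of_real (x a) * w a) = 0"
  proof -
    have "(\<Sum>a<N. of_real (x a) * w a) = (\<Sum>b<N. (\<Sum>a<N. ?U b a * of_real (x a)) * of_real (r b))"
    proof -
      have "(\<Sum>a<N. of_real (x a) * w a) = (\<Sum>a<N. \<Sum>b<N. of_real (x a) * (?U a b * of_real (r b)))"
        unfolding w_def by (simp only: sum_distrib_left)
      also have "\<dots> = (\<Sum>b<N. \<Sum>a<N. of_real (x a) * (?U a b * of_real (r b)))"
        by (rule sum.swap)
      also have "\<dots> = (\<Sum>b<N. \<Sum>a<N. ?U b a * of_real (x a) * of_real (r b))"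
      proof (intro sum.cong refl)
        fix a b assume "a \<in> {..<N}" "b \<in> {..<N}"
        then have "?U a b = ?U b a" using trans_sym[OF sym, where a=a and b=b and t=t] by simp
        then show "of_real (x a) * (?U a b * of_real (r b)) = ?U b a * of_real (x a) * of_real (r b)"
          by (simp only: mult_ac)
      qed
      also have "\<dots> = (\<Sum>b<N. (\<Sum>a<N. ?U b a * of_real (x a)) * of_real (r b))"
        by (simp only: sum_distrib_right)
      finally show ?thesis .
    qed
    also have "\<dots> = (\<Sum>b<N. of_real (x b * r b))" using Ux by simp
    also have "\<dots> = of_real ((\<Sum>b<N. e b * x b) - c * S)"
    proof -
      have "(\<Sum>b<N. x b * r b) = (\<Sum>b<N. e b * x b - c * (x b)^2)"
        by (intro sum.cong refl) (simp add: r_def algebra_simps power2_eq_square)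
      also have "\<dots> = (\<Sum>b<N. e b * x b) - c * S"
        unfolding S_def by (simp only: sum_subtractf sum_distrib_left)
      finally show ?thesis by (simp only: of_real_sum[symmetric])
    qed
    also have "\<dots> = 0" using ee[of x] xv cS by simp
    finally show ?thesis .
  qed
  have wv: "w v = (\<Sum>a<N. of_real (r a) * w a)"
  proof -
    have "(\<Sum>a<N. of_real (r a) * w a) = (\<Sum>a<N. of_real (e a) * w a) - of_real c * (\<Sum>a<N. of_real (x a) * w a)"
      by (simp add: r_def algebra_simps sum_subtractf sum_distrib_left)
    also have "(\<Sum>a<N. of_real (e a) * w a) = w v"
      using sum_delta_l[OF v, of w] unfolding e_def by (simp add: if_distrib eq_commute cong: if_cong)
    finally show ?thesis using xw by simp
  qed
  define R where "R = (\<Sum>l<N. (r l)^2)"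
  have R: "R = 1 - c"
  proof -
    have "R = (\<Sum>l<N. e l * e l) - 2 * c * (\<Sum>l<N. e l * x l) + c * (c * S)"
    proof -
      have "R = (\<Sum>l<N. e l * e l - 2 * c * (e l * x l) + c * (c * (x l)^2))"
        unfolding R_def r_def by (intro sum.cong refl) (simp add: power2_eq_square algebra_simps)
      also have "\<dots> = (\<Sum>l<N. e l * e l) - 2 * c * (\<Sum>l<N. e l * x l) + c * (c * S)"
        unfolding S_def by (simp only: sum.distrib sum_subtractf sum_distrib_left)
      finally show ?thesis .
    qed
    then show ?thesis using ee[of e] ee[of x] xv cS by (simp add: e_def)
  qed
  have R0: "R \<ge> 0" unfolding R_def by (intro sum_nonneg) auto
  have "cmod (w v) \<le> (\<Sum>a<N. \<bar>r a\<bar> * \<bar>cmod (w a)\<bar>)"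
    unfolding wv by (rule order_trans[OF norm_sum]) (simp add: norm_mult)
  also have "\<dots> \<le> L2_set r {..<N} * L2_set (\<lambda>a. cmod (w a)) {..<N}"
    by (rule L2_set_mult_ineq)
  also have "\<dots> = sqrt R * sqrt R"
    using trans_norm[OF sym, where t=t and r=r] unfolding L2_set_def R_def w_def by simp
  also have "\<dots> = R" using R0 by simp
  finally have "cmod (w v) \<le> 1 - c" using R by simp
  moreover have "cmod (?U v v) \<ge> c - cmod (w v)"
  proof -
    have "c > 0" using S1 by (simp add: c_def)
    have "cmod (complex_of_real c) - cmod (w v) \<le> cmod (complex_of_real c + w v)"
      by (rule norm_diff_ineq)
    then show ?thesis using Uvv \<open>c > 0\<close> by (simp add: add.commute)
  qed
  ultimately show ?thesis unfolding c_def S_def by simp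
qed



lemma mod_suc: "(x::nat) < N \<Longrightarrow> (x + 1) mod N = (if x + 1 = N then 0 else x + 1)"
  by auto

lemma cyc_adj_iff:
  assumes "i < N" "l < N" "N \<ge> 3"
  shows "cyc_adj N i l \<longleftrightarrow> (l = (if i + 1 = N then 0 else i + 1) \<or> l = (if i = 0 then N - 1 else i - 1))"
proof -
  have a: "(i + 1) mod N = (if i + 1 = N then 0 else i + 1)" using assms by (rule_tac mod_suc) auto
  have b: "(l + 1) mod N = (if l + 1 = N then 0 else l + 1)" using assms by (rule_tac mod_suc) auto
  show ?thesis using assms unfolding cyc_adj_def a b by auto
qed

lemma wcyc_sym: "wcyc N u v w \<alpha> i j = wcyc N u v w \<alpha> j i"
  unfolding wcyc_def cyc_adj_def by (auto simp: insert_commute)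

lemma sum_even_count:
  "(\<Sum>j<2*m. (if even j then c else 0)) = real m * (c::real)"
proof (induction m)
  case 0 then show ?case by simp
next
  case (Suc m)
  have "{..<2 * Suc m} = insert (Suc (2*m)) (insert (2*m) {..<2*m})" by auto
  then show ?case using Suc by (simp add: algebra_simps)
qed

theorem proposition46:
  fixes k u v w :: nat and \<alpha> :: real
  assumes "k \<ge> 1"
    and "cyc_adj (4 * k) u v" and "cyc_adj (4 * k) v w" and "u \<noteq> w"
    and "\<alpha> \<noteq> 0"
    and "\<bar>\<alpha>\<bar> > sqrt (2 * real k - 1)"
  shows "sedentary (4 * k) (wcyc (4 * k) u v w \<alpha>) v"
proof -
  define N where "N = 4 * k"
  have N4: "N \<ge> 4" using assms(1) by (simp add: N_def)
  have Neven: "even N" by (simp add: N_def)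
  have uvw: "u < N" "v < N" "w < N" using assms(2,3) by (auto simp: N_def cyc_adj_def)
  have adj_uv: "cyc_adj N u v" and adj_vw: "cyc_adj N v w" using assms(2,3) by (simp_all add: N_def)
  define W where "W = wcyc N u v w \<alpha>"
  define dd where "dd l = (if v \<le> l then l - v else l + N - v)" for l
  define x where "x l = (if dd l = 0 then 1 else if odd (dd l) then 0 else (-1)^(dd l div 2) / \<alpha>)" for l
  define p where "p i = (if i + 1 = N then 0 else i + 1)" for i :: nat
  define q where "q i = (if i = 0 then N - 1 else i - 1)" for i :: nat
  have ddN: "dd l < N" if "l < N" for l using that uvw by (auto simp: dd_def)
  have dd0: "dd l = 0 \<longleftrightarrow> l = v" if "l < N" for l using that uvw by (auto simp: dd_def)
  have ddinj: "l = l'" if "l < N" "l' < N" "dd l = dd l'" for l l' using that uvw by (auto simp: dd_def split: if_splits)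
  have pN: "p i < N" and qN: "q i < N" if "i < N" for i using that N4 by (auto simp: p_def q_def)
  have ddp: "dd (p i) = (if dd i + 1 = N then 0 else dd i + 1)" if "i < N" for i
    using that uvw N4 by (auto simp: dd_def p_def)
  have ddq: "dd (q i) = (if dd i = 0 then N - 1 else dd i - 1)" if "i < N" for i
    using that uvw N4 by (auto simp: dd_def q_def)
  have adjp: "cyc_adj N i (p i)" and adjq: "cyc_adj N i (q i)" if "i < N" for i
    using cyc_adj_iff[OF that pN[OF that]] cyc_adj_iff[OF that qN[OF that]] N4 by (auto simp: p_def q_def)
  have adj_pq: "l = p i \<or> l = q i" if "i < N" "l < N" "cyc_adj N i l" for i l
    using cyc_adj_iff[OF that(1,2)] that(3) N4 by (auto simp: p_def q_def)
  have ddu: "dd u = 1 \<or> dd u = N - 1"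
  proof -
    have "v = p u \<or> v = q u" using adj_pq[OF uvw(1,2) adj_uv] .
    moreover have "dd v = 0" using dd0[OF uvw(2)] by simp
    ultimately have "dd (p u) = 0 \<or> dd (q u) = 0" by auto
    then show ?thesis using ddp[OF uvw(1)] ddq[OF uvw(1)] ddN[OF uvw(1)] by (auto split: if_splits)
  qed
  have ddw: "dd w = 1 \<or> dd w = N - 1"
  proof -
    have "w = p v \<or> w = q v" using adj_pq[OF uvw(2,3) adj_vw] .
    then show ?thesis using ddp[OF uvw(2)] ddq[OF uvw(2)] dd0[OF uvw(2)] N4 by auto
  qed
  have nbv: "i = u \<or> i = w" if "i < N" "dd i = 1 \<or> dd i = N - 1" for i
  proof -
    have "dd u \<noteq> dd w" using ddinj uvw assms(4) by blast
    then show ?thesis using that ddu ddw ddinj[OF that(1) uvw(1)] ddinj[OF that(1) uvw(3)] N4 by auto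
  qed
  have W1: "W i l = 1" if "cyc_adj N i l" "v \<noteq> i" "v \<noteq> l" for i l
    using that unfolding W_def wcyc_def by (auto simp: doubleton_eq_iff)
  have Wa: "W i l = 1 / \<alpha>" if "cyc_adj N i l" "l = v" "i = u \<or> i = w" for i l
    using that unfolding W_def wcyc_def by (auto simp: insert_commute)
  have Wsym: "\<And>i j. i < N \<Longrightarrow> j < N \<Longrightarrow> W i j = W j i"
    unfolding W_def by (rule wcyc_sym)
  have xv: "x v = 1" using dd0[OF uvw(2)] by (simp add: x_def)
  have xodd: "x l = 0" if "odd (dd l)" for l
  proof -
    have "dd l \<noteq> 0" using that by (metis even_zero)
    then show ?thesis using that by (simp add: x_def)
  qed
  have ker: "(\<Sum>l<N. W i l * x l) = 0" if i: "i < N" for i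
  proof -
    have pq: "p i \<noteq> q i" using i N4 by (auto simp: p_def q_def)
    have "(\<Sum>l<N. W i l * x l) = (\<Sum>l\<in>{p i, q i}. W i l * x l)"
    proof (rule sum.mono_neutral_right)
      show "finite {..<N}" by simp
      show "{p i, q i} \<subseteq> {..<N}" using pN[OF i] qN[OF i] by auto
      show "\<forall>l\<in>{..<N} - {p i, q i}. W i l * x l = 0"
      proof
        fix l assume l: "l \<in> {..<N} - {p i, q i}"
        then have "\<not> cyc_adj N i l" using adj_pq[OF i] by auto
        then show "W i l * x l = 0" by (simp add: W_def wcyc_def)
      qed
    qed
    also have "\<dots> = W i (p i) * x (p i) + W i (q i) * x (q i)" using pq by simp
    also have "\<dots> = 0"
    proof (cases "even (dd i)")
      case True
      have "odd (dd (p i))" using True Neven ddp[OF i] by auto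
      moreover have "odd (dd (q i))"
      proof (cases "dd i = 0")
        case True then show ?thesis using Neven N4 ddq[OF i] by simp
      next
        case False then show ?thesis using \<open>even (dd i)\<close> ddq[OF i] by simp
      qed
      ultimately show ?thesis using xodd by simp
    next
      case False
      have nz: "dd i \<noteq> 0" using False by (metis even_zero)
      have iv: "v \<noteq> i" using dd0[OF i] nz by auto
      consider "dd i = 1" | "dd i = N - 1" | "1 < dd i \<and> dd i < N - 1" using nz ddN[OF i] by linarith
      then show ?thesis
      proof cases
        case 1
        have "dd (q i) = 0" using ddq[OF i] 1 by simp
        then have qv: "q i = v" using dd0[OF qN[OF i]] by simp
        have dp: "dd (p i) = 2" using ddp[OF i] 1 N4 by simp
        then have pv: "v \<noteq> p i" using dd0[OF pN[OF i]] by auto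
        have "x (p i) = - 1 / \<alpha>" using dp by (simp add: x_def)
        moreover have "x (q i) = 1" using qv xv by simp
        moreover have "W i (p i) = 1" using W1[OF adjp[OF i] iv pv] .
        moreover have "W i (q i) = 1 / \<alpha>" using Wa[OF adjq[OF i] qv] nbv[OF i] 1 by auto
        ultimately show ?thesis by simp
      next
        case 2
        have "dd (p i) = 0" using ddp[OF i] 2 N4 by simp
        then have pv: "p i = v" using dd0[OF pN[OF i]] by simp
        have dq: "dd (q i) = N - 2" using ddq[OF i] 2 N4 by simp
        then have qv: "v \<noteq> q i" using dd0[OF qN[OF i]] N4 by auto
        have e: "(N - 2) div 2 = 2 * (k - 1) + 1" using assms(1) unfolding N_def by auto
        have "x (q i) = - 1 / \<alpha>" using dq N4 e by (simp add: x_def Neven power_add power_mult)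
        moreover have "x (p i) = 1" using pv xv by simp
        moreover have "W i (q i) = 1" using W1[OF adjq[OF i] iv qv] .
        moreover have "W i (p i) = 1 / \<alpha>" using Wa[OF adjp[OF i] pv] nbv[OF i] 2 by auto
        ultimately show ?thesis by simp
      next
        case 3
        obtain m where m: "dd i = 2 * m + 1" using False oddE by blast
        have dp: "dd (p i) = 2 * m + 2" using ddp[OF i] 3 m by (auto split: if_splits)
        have dq: "dd (q i) = 2 * m" using ddq[OF i] 3 m by simp
        have m1: "m \<ge> 1" using 3 m by simp
        have pv: "v \<noteq> p i" using dd0[OF pN[OF i]] dp by auto
        have qv: "v \<noteq> q i" using dd0[OF qN[OF i]] dq m1 by auto
        have "x (p i) = (-1) ^ (m + 1) / \<alpha>" using dp by (simp add: x_def)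
        moreover have "x (q i) = (-1) ^ m / \<alpha>" using dq m1 by (simp add: x_def)
        moreover have "W i (q i) = 1" using W1[OF adjq[OF i] iv qv] .
        moreover have "W i (p i) = 1" using W1[OF adjp[OF i] iv pv] .
        ultimately show ?thesis by simp
      qed
    qed
    finally show ?thesis .
  qed
  have S: "(\<Sum>l<N. (x l)^2) = 1 + (2 * real k - 1) / \<alpha>^2"
  proof -
    define f where "f j = (if j = 0 then 1 else if odd j then 0 else ((-1::real)^(j div 2) / \<alpha>)^2)" for j :: nat
    define iv where "iv j = (if j + v < N then j + v else j + v - N)" for j
    have neg1sq: "((-1::real)^n)^2 = 1" for n by (simp add: power_mult[symmetric])
    have "(\<Sum>l<N. (x l)^2) = (\<Sum>j<N. f j)"
    proof (rule sum.reindex_bij_witness[where i=iv and j=dd])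
      show "iv (dd a) = a" if "a \<in> {..<N}" for a using that uvw by (auto simp: iv_def dd_def)
      show "dd a \<in> {..<N}" if "a \<in> {..<N}" for a using that ddN by auto
      show "dd (iv b) = b" if "b \<in> {..<N}" for b using that uvw by (auto simp: iv_def dd_def)
      show "iv b \<in> {..<N}" if "b \<in> {..<N}" for b using that uvw by (auto simp: iv_def)
      show "f (dd a) = (x a)^2" if "a \<in> {..<N}" for a by (simp add: f_def x_def)
    qed
    also have "\<dots> = (\<Sum>j<N. (if even j then 1 / \<alpha>^2 else 0) + (if j = 0 then 1 - 1 / \<alpha>^2 else 0))"
      by (intro sum.cong refl) (auto simp: f_def power_divide neg1sq)
    also have "\<dots> = (\<Sum>j<N. if even j then 1 / \<alpha>^2 else 0) + (1 - 1 / \<alpha>^2)"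
      using N4 by (simp add: sum.distrib)
    also have "(\<Sum>j<N. if even j then 1 / \<alpha>^2 else 0) = real (2 * k) * (1 / \<alpha>^2)"
      using sum_even_count[where m="2 * k" and c="1 / \<alpha>^2"] by (simp add: N_def)
    finally show ?thesis by (simp add: diff_divide_distrib add_divide_distrib algebra_simps)
  qed
  have a2: "2 * real k - 1 < \<alpha>^2"
  proof -
    have "sqrt (2 * real k - 1) < sqrt (\<alpha>^2)" using assms(6) by (simp add: real_sqrt_abs)
    then show ?thesis by (simp only: real_sqrt_less_iff)
  qed
  define C where "C = 2 / (1 + (2 * real k - 1) / \<alpha>^2) - 1"
  have ap: "\<alpha>^2 > 0" using assms(5) by simp
  have k1: "2 * real k - 1 \<ge> 1" using assms(1) by simp
  have q1: "(2 * real k - 1) / \<alpha>^2 < 1" using a2 ap by (simp add: divide_less_eq)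
  have q0: "(2 * real k - 1) / \<alpha>^2 \<ge> 0" using k1 ap by simp
  have C0: "0 < C" unfolding C_def using q1 q0 by (simp add: field_simps)
  have C1: "C \<le> 1"
  proof -
    have gen: "2 / (1 + q) \<le> 2" if "q \<ge> 0" for q :: real
      using that by (subst pos_divide_le_eq) auto
    have "2 / (1 + (2 * real k - 1) / \<alpha>^2) \<le> 2" by (rule gen[OF q0])
    then show ?thesis unfolding C_def by simp
  qed
  have bound: "C \<le> cmod (transition N W t v v)" for t
    using sed_bound[OF Wsym uvw(2) ker xv, of t] S unfolding C_def by simp
  have "C \<le> (INF t\<in>{0<..}. cmod (transition N W t v v))"
    by (rule cINF_greatest) (auto simp: bound)
  then show ?thesis unfolding sedentary_def N_def[symmetric] W_def[symmetric] using C0 C1 by blast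
qed


end
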